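(* Let $\mathcal{G}=\langle G_1,\dots,G_L\rangle$ be a non-strict temporal graph with vertex set $V$ in which every layer consists of exactly two components and no two consecutive layers have the same partition. If for some $i$ with $2\le i\le L-1$ the transition from step $i-1$ to step $i$ is free and the transition from step $i$ to step $i+1$ is restricted, then for every $s\in V$ there is a non-strict exploration schedule starting at $s$.
   Context: A non-strict temporal graph $\mathcal{G}=\langle G_1,\dots,G_L\rangle$ with vertex set $V$ is a sequence of partitions $G_t$ of $V$ into components. A non-strict temporal walk starting at $v$ at time $t_1$ is a sequence of components $C_{t_1},\dots,C_{t_l}$ with $t_{j+1}=t_j+1$, $C_{t_j}\in G_{t_j}$, $C_{t_j}\cap C_{t_{j+1}}\neq\emptyset$, $v\in C_{t_1}$, $t_l\le L$; it visits $\bigcup_j C_{t_j}$. A non-strict exploration schedule starting at $s$ is such a walk starting at $s$ at time $1$ that visits all of $V$. For $G_i=\{A_i,B_i\}$, $G_{i+1}=\{A_{i+1},B_{i+1}\}$, the transition from step $i$ to $i+1$ is free if $A_i\cap A_{i+1}$, $A_i\cap B_{i+1}$, $B_i\cap A_{i+1}$, $B_i\cap B_{i+1}$ are all non-empty, and restricted if exactly one of them is empty. *)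

theory Defs
  imports Main "HOL-Library.Disjoint_Sets"
begin

definition temporal_graph :: "'a set \<Rightarrow> nat \<Rightarrow> (nat \<Rightarrow> 'a set set) \<Rightarrow> bool" where
  "temporal_graph V L G \<longleftrightarrow> (\<forall>t\<in>{1..L}. partition_on V (G t))"

definition temporal_walk :: "nat \<Rightarrow> (nat \<Rightarrow> 'a set set) \<Rightarrow> 'a \<Rightarrow> nat \<Rightarrow> 'a set list \<Rightarrow> bool" where
  "temporal_walk L G v t1 Cs \<longleftrightarrow>
     Cs \<noteq> [] \<and> 1 \<le> t1 \<and> t1 + length Cs - 1 \<le> L \<and>
     (\<forall>j<length Cs. Cs ! j \<in> G (t1 + j)) \<and>
     (\<forall>j. Suc j < length Cs \<longrightarrow> Cs ! j \<inter> Cs ! Suc j \<noteq> {}) \<and>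
     v \<in> hd Cs"

definition visits :: "'a set list \<Rightarrow> 'a set" where
  "visits Cs = \<Union> (set Cs)"

definition exploration_schedule :: "'a set \<Rightarrow> nat \<Rightarrow> (nat \<Rightarrow> 'a set set) \<Rightarrow> 'a \<Rightarrow> 'a set list \<Rightarrow> bool" where
  "exploration_schedule V L G s Cs \<longleftrightarrow> temporal_walk L G s 1 Cs \<and> V \<subseteq> visits Cs"

definition free_transition :: "(nat \<Rightarrow> 'a set set) \<Rightarrow> nat \<Rightarrow> bool" where
  "free_transition G i \<longleftrightarrow> (\<forall>X\<in>G i. \<forall>Y\<in>G (Suc i). X \<inter> Y \<noteq> {})"

definition restricted_transition :: "(nat \<Rightarrow> 'a set set) \<Rightarrow> nat \<Rightarrow> bool" where
  "restricted_transition G i \<longleftrightarrow>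
     card {(X, Y). X \<in> G i \<and> Y \<in> G (Suc i) \<and> X \<inter> Y = {}} = 1"

end

theory Submission
  imports Defs
begin

lemma card2_other:
  assumes "card S = 2" "X \<in> S"
  obtains B where "S = {X, B}" "B \<noteq> X"
proof -
  from assms obtain a b where S: "S = {a,b}" "a \<noteq> b" by (meson card_2_iff)
  show ?thesis
  proof (cases "X = a")
    case True thus ?thesis using that S by auto
  next
    case False thus ?thesis using that S assms(2) by auto
  qed
qed

theorem lemma4:
  fixes V :: "'a set" and L :: nat and G :: "nat \<Rightarrow> 'a set set" and i :: nat and s :: 'a
  assumes "temporal_graph V L G"
    and "\<forall>t\<in>{1..L}. card (G t) = 2"
    and "\<forall>t. 1 \<le> t \<and> t < L \<longrightarrow> G t \<noteq> G (Suc t)"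
    and "2 \<le> i" and "i \<le> L - 1"
    and "free_transition G (i - 1)"
    and "restricted_transition G i"
    and "s \<in> V"
  shows "\<exists>Cs. exploration_schedule V L G s Cs"
proof -
  have part: "\<And>t. 1 \<le> t \<Longrightarrow> t \<le> L \<Longrightarrow> partition_on V (G t)"
    using assms(1) unfolding temporal_graph_def by auto
  have iL: "i + 1 \<le> L" using assms(4,5) by linarith
  define P where "P = {(X, Y). X \<in> G i \<and> Y \<in> G (Suc i) \<and> X \<inter> Y = {}}"
  have cP: "card P = 1" using assms(7) unfolding restricted_transition_def P_def .
  then obtain p where "P = {p}" by (rule card_1_singletonE)
  then obtain X Y where PXY: "P = {(X,Y)}" by (cases p) simp
  hence "(X,Y) \<in> P" by simp
  hence XY: "X \<in> G i" "Y \<in> G (Suc i)" "X \<inter> Y = {}" unfolding P_def by simp_all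
  have "i \<in> {1..L}" "Suc i \<in> {1..L}" using assms(4) iL by simp_all
  hence c1: "card (G i) = 2" "card (G (Suc i)) = 2" using assms(2) by blast+
  obtain B where GB: "G i = {X, B}" "B \<noteq> X" using card2_other[OF c1(1) XY(1)] by blast
  obtain A where GA: "G (Suc i) = {Y, A}" "A \<noteq> Y" using card2_other[OF c1(2) XY(2)] by blast
  have pi: "partition_on V (G i)" using part assms(4) iL by auto
  have pi1: "partition_on V (G (Suc i))" using part assms(4) iL by auto
  have VXB: "V = X \<union> B" using pi GB unfolding partition_on_def by auto
  have VYA: "V = Y \<union> A" using pi1 GA unfolding partition_on_def by auto
  have XA: "X \<subseteq> A" using XY(3) VXB VYA by blast
  have VBA: "V \<subseteq> B \<union> A" using VXB XA by blast
  have BA: "B \<inter> A \<noteq> {}"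
  proof
    assume "B \<inter> A = {}"
    hence "(B, A) \<in> P" unfolding P_def using GA GB by auto
    thus False using PXY GB by auto
  qed
  define f where "f t = (SOME C. C \<in> G t \<and> s \<in> C)" for t
  have f: "f t \<in> G t \<and> s \<in> f t" if "1 \<le> t" "t \<le> L" for t
  proof -
    have "\<exists>C. C \<in> G t \<and> s \<in> C" using part[OF that] assms(8) unfolding partition_on_def by auto
    thus ?thesis unfolding f_def by (rule someI_ex)
  qed
  define g where "g t = (if t < i then f t else if t = i then B else A)" for t
  define Cs where "Cs = map g [1..<i+2]"
  have len: "length Cs = i + 1" unfolding Cs_def by simp
  have nth: "Cs ! j = g (1 + j)" if "j < i + 1" for j
    unfolding Cs_def using that by (simp add: nth_upt del: upt_Suc)
  have mem: "Cs ! j \<in> G (1 + j)" if jl: "j < length Cs" for j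
  proof -
    have e: "Cs ! j = g (1+j)" using that len nth by auto
    consider "1 + j < i" | "1 + j = i" | "1 + j = Suc i" using jl len by linarith
    thus ?thesis
    proof cases
      case 1 thus ?thesis using e f[of "1+j"] iL unfolding g_def by simp
    next
      case 2 thus ?thesis using e GB unfolding g_def by simp
    next
      case 3 thus ?thesis using e GA unfolding g_def by simp
    qed
  qed
  have fr: "f (i - 1) \<inter> B \<noteq> {}"
  proof -
    have "f (i-1) \<in> G (i-1)" using f[of "i-1"] assms(4) iL by auto
    moreover have "B \<in> G (Suc (i-1))" using GB assms(4) by (simp add: Suc_diff_1)
    ultimately show ?thesis using assms(6) unfolding free_transition_def by blast
  qed
  have inter: "Cs ! j \<inter> Cs ! Suc j \<noteq> {}" if jl: "Suc j < length Cs" for j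
  proof -
    have e1: "Cs ! j = g (1+j)" "Cs ! Suc j = g (2 + j)" using that len nth by auto
    consider "2 + j < i" | "2 + j = i" | "2 + j = i + 1" using jl len by linarith
    thus ?thesis
    proof cases
      case 1 thus ?thesis using e1 f[of "1+j"] f[of "2+j"] iL unfolding g_def by auto
    next
      case 2
      hence "1 + j = i - 1" by simp
      thus ?thesis using e1 2 fr unfolding g_def by auto
    next
      case 3 thus ?thesis using e1 BA unfolding g_def by auto
    qed
  qed
  have hd: "s \<in> hd Cs"
  proof -
    have "Cs \<noteq> []" using len by auto
    hence "hd Cs = Cs ! 0" by (rule hd_conv_nth)
    thus ?thesis using nth[of 0] f[of 1] assms(4) iL unfolding g_def by auto
  qed
  have vis: "V \<subseteq> visits Cs"
  proof -
    have "Cs ! (i-1) = B" using nth[of "i-1"] assms(4) unfolding g_def by auto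
    moreover have "Cs ! i = A" using nth[of i] unfolding g_def by auto
    moreover have "i - 1 < length Cs" "i < length Cs" using len by auto
    ultimately have "B \<in> set Cs" "A \<in> set Cs" by (metis nth_mem)+
    thus ?thesis using VBA unfolding visits_def by auto
  qed
  have "temporal_walk L G s 1 Cs"
    unfolding temporal_walk_def using len iL mem inter hd by auto
  thus ?thesis using vis unfolding exploration_schedule_def by blast
qed

end
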